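(* Let $(\mathcal B,<)$ be a monoidal poset, $B\in\mathcal B$, and $i\ne k$ nodes with $r_iB=r_kB>B$. If $\beta$ is an element of $B$ of smallest height among the elements of $B$ moved by $r_i$ or $r_k$, then $\beta+\alpha_i+\alpha_k\in B$. Furthermore $i\not\sim k$.
   Context: Setting: $M$ is a spherical simply laced Coxeter diagram with nodes $1,\dots,n$ ($i\sim j$: distinct adjacent nodes; $i\not\sim j$ otherwise); $W$ its Weyl group with positive roots $\Phi^+$, fundamental roots $\alpha_i$, reflections $r_i$, inner product with $(\alpha_i,\alpha_i)=2$, $(\alpha_i,\alpha_j)=-1$ if $i\sim j$, $0$ otherwise; height $\mathrm{ht}(\sum a_k\alpha_k)=\sum a_k$. A root $\beta$ is moved by $r_i$ if $(\alpha_i,\beta)=\pm1$. For a set $B$ of mutually orthogonal positive roots, $wB=\Phi^+\cap\{\pm w\beta:\beta\in B\}$. A $W$-orbit $\mathcal B$ of such sets is admissible if for every $B\in\mathcal B$, all nodes $i\not\sim j$ and root $\gamma$ with $\gamma,\gamma-\alpha_i+\alpha_j\in B$, $r_iB=r_jB$. For $B,C\in\mathcal B$ write $B\prec C$ if $B\ne C$ and the minimal height of an element of $B\setminus C$ is strictly smaller than the minimal height of an element of $C\setminus B$. For admissible $\mathcal B$, the monoidal poset $(\mathcal B,<)$ is $\mathcal B$ with the partial order $<$ given by the transitive closure of $\{(B,r_jB): B\in\mathcal B,\ j\text{ a node},\ B\prec r_jB\}$; $>$ is the reverse relation. *)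

theory Defs
  imports Main
begin

text \<open>Vectors in the root lattice are functions
  nat => int, the coefficients with respect to the fundamental roots alpha_1..alpha_n.\<close>

type_synonym vec = "nat \<Rightarrow> int"

definition nodes :: "nat \<Rightarrow> nat set" where
  "nodes n = {1..n}"

definition diagram :: "nat \<Rightarrow> (nat \<Rightarrow> nat \<Rightarrow> bool) \<Rightarrow> bool" where
  "diagram n adj \<longleftrightarrow> (\<forall>i\<in>nodes n. \<forall>j\<in>nodes n. adj i j \<longleftrightarrow> adj j i) \<and> (\<forall>i\<in>nodes n. \<not> adj i i)"

definition alpha :: "nat \<Rightarrow> vec" where
  "alpha i = (\<lambda>k. if k = i then 1 else 0)"

definition cartan :: "(nat \<Rightarrow> nat \<Rightarrow> bool) \<Rightarrow> nat \<Rightarrow> nat \<Rightarrow> int" where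
  "cartan adj i j = (if i = j then 2 else if adj i j then -1 else 0)"

definition ip :: "nat \<Rightarrow> (nat \<Rightarrow> nat \<Rightarrow> bool) \<Rightarrow> vec \<Rightarrow> vec \<Rightarrow> int" where
  "ip n adj v w = (\<Sum>i\<in>nodes n. \<Sum>j\<in>nodes n. v i * w j * cartan adj i j)"

definition height :: "nat \<Rightarrow> vec \<Rightarrow> int" where
  "height n v = (\<Sum>k\<in>nodes n. v k)"

definition refl :: "nat \<Rightarrow> (nat \<Rightarrow> nat \<Rightarrow> bool) \<Rightarrow> nat \<Rightarrow> vec \<Rightarrow> vec" where
  "refl n adj i v = (\<lambda>k. v k - ip n adj (alpha i) v * alpha i k)"

inductive_set weyl :: "nat \<Rightarrow> (nat \<Rightarrow> nat \<Rightarrow> bool) \<Rightarrow> (vec \<Rightarrow> vec) set"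
  for n adj where
  weyl_id: "id \<in> weyl n adj"
| weyl_step: "w \<in> weyl n adj \<Longrightarrow> i \<in> nodes n \<Longrightarrow> refl n adj i \<circ> w \<in> weyl n adj"

definition spherical :: "nat \<Rightarrow> (nat \<Rightarrow> nat \<Rightarrow> bool) \<Rightarrow> bool" where
  "spherical n adj \<longleftrightarrow> finite (weyl n adj)"

inductive_set roots :: "nat \<Rightarrow> (nat \<Rightarrow> nat \<Rightarrow> bool) \<Rightarrow> vec set"
  for n adj where
  roots_simple: "i \<in> nodes n \<Longrightarrow> alpha i \<in> roots n adj"
| roots_refl: "v \<in> roots n adj \<Longrightarrow> i \<in> nodes n \<Longrightarrow> refl n adj i v \<in> roots n adj"

definition posroots :: "nat \<Rightarrow> (nat \<Rightarrow> nat \<Rightarrow> bool) \<Rightarrow> vec set" where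
  "posroots n adj = {v \<in> roots n adj. \<forall>k\<in>nodes n. v k \<ge> 0}"

definition moved :: "nat \<Rightarrow> (nat \<Rightarrow> nat \<Rightarrow> bool) \<Rightarrow> nat \<Rightarrow> vec \<Rightarrow> bool" where
  "moved n adj i \<beta> \<longleftrightarrow> ip n adj (alpha i) \<beta> = 1 \<or> ip n adj (alpha i) \<beta> = -1"

definition orth_set :: "nat \<Rightarrow> (nat \<Rightarrow> nat \<Rightarrow> bool) \<Rightarrow> vec set \<Rightarrow> bool" where
  "orth_set n adj B \<longleftrightarrow> B \<subseteq> posroots n adj \<and> (\<forall>\<beta>\<in>B. \<forall>\<gamma>\<in>B. \<beta> \<noteq> \<gamma> \<longrightarrow> ip n adj \<beta> \<gamma> = 0)"

definition act :: "nat \<Rightarrow> (nat \<Rightarrow> nat \<Rightarrow> bool) \<Rightarrow> (vec \<Rightarrow> vec) \<Rightarrow> vec set \<Rightarrow> vec set" where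
  "act n adj w B = posroots n adj \<inter> {v. \<exists>\<beta>\<in>B. v = w \<beta> \<or> v = (\<lambda>m. - w \<beta> m)}"

definition orbit :: "nat \<Rightarrow> (nat \<Rightarrow> nat \<Rightarrow> bool) \<Rightarrow> vec set \<Rightarrow> vec set set" where
  "orbit n adj B0 = {act n adj w B0 | w. w \<in> weyl n adj}"

definition admissible :: "nat \<Rightarrow> (nat \<Rightarrow> nat \<Rightarrow> bool) \<Rightarrow> vec set set \<Rightarrow> bool" where
  "admissible n adj \<B> \<longleftrightarrow>
     (\<forall>B\<in>\<B>. \<forall>i\<in>nodes n. \<forall>j\<in>nodes n. \<forall>\<gamma>.
        \<not> adj i j \<longrightarrow> \<gamma> \<in> B \<longrightarrow> (\<lambda>m. \<gamma> m - alpha i m + alpha j m) \<in> B \<longrightarrow>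
        act n adj (refl n adj i) B = act n adj (refl n adj j) B)"

definition prec :: "nat \<Rightarrow> vec set \<Rightarrow> vec set \<Rightarrow> bool" where
  "prec n B C \<longleftrightarrow> B \<noteq> C \<and> B - C \<noteq> {} \<and> C - B \<noteq> {} \<and>
     Min (height n ` (B - C)) < Min (height n ` (C - B))"

definition mless :: "nat \<Rightarrow> (nat \<Rightarrow> nat \<Rightarrow> bool) \<Rightarrow> vec set set \<Rightarrow> (vec set \<times> vec set) set" where
  "mless n adj \<B> = {(B, act n adj (refl n adj j) B) | B j.
       B \<in> \<B> \<and> j \<in> nodes n \<and> prec n B (act n adj (refl n adj j) B)}\<^sup>+"

end

theory Submission
  imports Defs
begin

lemma finite_nodes[simp]: "finite (nodes n)" by (simp add: nodes_def)

lemma ip_plus_l: "ip n adj (\<lambda>m. u m + v m) w = ip n adj u w + ip n adj v w"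
  by (simp add: ip_def algebra_simps sum.distrib)
lemma ip_minus_l: "ip n adj (\<lambda>m. u m - v m) w = ip n adj u w - ip n adj v w"
  by (simp add: ip_def algebra_simps sum_subtractf)
lemma ip_smul_l: "ip n adj (\<lambda>m. t * u m) w = t * ip n adj u w"
  by (simp add: ip_def algebra_simps sum_distrib_left)
lemma ip_uminus_l: "ip n adj (\<lambda>m. - u m) w = - ip n adj u w"
  by (simp add: ip_def algebra_simps sum_negf)
lemma ip_plus_r: "ip n adj w (\<lambda>m. u m + v m) = ip n adj w u + ip n adj w v"
  by (simp add: ip_def algebra_simps sum.distrib)
lemma ip_minus_r: "ip n adj w (\<lambda>m. u m - v m) = ip n adj w u - ip n adj w v"
  by (simp add: ip_def algebra_simps sum_subtractf)
lemma ip_smul_r: "ip n adj w (\<lambda>m. t * u m) = t * ip n adj w u"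
  by (simp add: ip_def algebra_simps sum_distrib_left)
lemma ip_uminus_r: "ip n adj w (\<lambda>m. - u m) = - ip n adj w u"
  by (simp add: ip_def algebra_simps sum_negf)

lemma ip_smul_l': "ip n adj (\<lambda>m. u m * t) w = ip n adj u w * t"
  by (simp add: ip_def algebra_simps sum_distrib_left sum_distrib_right)
lemma ip_smul_r': "ip n adj w (\<lambda>m. u m * t) = ip n adj w u * t"
  by (simp add: ip_def algebra_simps sum_distrib_left sum_distrib_right)
lemmas ip_lin = ip_plus_l ip_minus_l ip_smul_l ip_uminus_l ip_plus_r ip_minus_r ip_smul_r ip_uminus_r ip_smul_l' ip_smul_r'

lemma ip_sym: assumes "diagram n adj" shows "ip n adj v w = ip n adj w v"
proof -
  have c: "\<And>i j. i \<in> nodes n \<Longrightarrow> j \<in> nodes n \<Longrightarrow> cartan adj i j = cartan adj j i"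
    using assms by (auto simp: diagram_def cartan_def)
  have "ip n adj v w = (\<Sum>i\<in>nodes n. \<Sum>j\<in>nodes n. v i * w j * cartan adj j i)"
    unfolding ip_def by (intro sum.cong refl) (simp add: c)
  also have "\<dots> = (\<Sum>j\<in>nodes n. \<Sum>i\<in>nodes n. v i * w j * cartan adj j i)"
    by (rule sum.swap)
  also have "\<dots> = ip n adj w v" unfolding ip_def by (intro sum.cong refl) (simp add: algebra_simps)
  finally show ?thesis .
qed

lemma ip_alpha_l: assumes "i \<in> nodes n"
  shows "ip n adj (alpha i) v = (\<Sum>j\<in>nodes n. v j * cartan adj i j)"
proof -
  have "\<And>a. (\<Sum>b\<in>nodes n. alpha i a * v b * cartan adj a b) = (if a = i then (\<Sum>b\<in>nodes n. v b * cartan adj i b) else 0)"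
    by (simp add: alpha_def)
  then show ?thesis using assms unfolding ip_def by (simp add: sum.delta)
qed

lemma ip_alpha_alpha: assumes "i \<in> nodes n" "j \<in> nodes n"
  shows "ip n adj (alpha i) (alpha j) = cartan adj i j"
proof -
  have "\<And>b. alpha j b * cartan adj i b = (if b = j then cartan adj i j else 0)"
    by (simp add: alpha_def)
  then show ?thesis using assms by (simp add: ip_alpha_l sum.delta)
qed

lemma ip_alpha_self[simp]: "i \<in> nodes n \<Longrightarrow> ip n adj (alpha i) (alpha i) = 2"
  by (simp add: ip_alpha_alpha cartan_def)

lemma height_plus: "height n (\<lambda>m. u m + v m) = height n u + height n v"
  by (simp add: height_def sum.distrib)
lemma height_minus: "height n (\<lambda>m. u m - v m) = height n u - height n v"
  by (simp add: height_def sum_subtractf)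
lemma height_smul: "height n (\<lambda>m. t * u m) = t * height n u"
  by (simp add: height_def sum_distrib_left)
lemma height_uminus: "height n (\<lambda>m. - u m) = - height n u"
  by (simp add: height_def sum_negf)
lemma height_alpha: "i \<in> nodes n \<Longrightarrow> height n (alpha i) = 1"
  by (simp add: height_def alpha_def sum.delta nodes_def)
lemmas height_lin = height_plus height_minus height_smul height_uminus

lemma refl_alpha: "refl n adj i v = (\<lambda>k. v k - ip n adj (alpha i) v * alpha i k)"
  by (simp add: refl_def)

lemma refl_refl: assumes "i \<in> nodes n" shows "refl n adj i (refl n adj i v) = v"
  using assms by (simp add: refl_def ip_lin algebra_simps)

lemma refl_ip: assumes "diagram n adj" "i \<in> nodes n"
  shows "ip n adj (refl n adj i v) (refl n adj i w) = ip n adj v w"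
  using assms by (simp add: refl_def ip_lin algebra_simps ip_sym[OF assms(1), of v "alpha i"])


lemma refl_lin: assumes "i \<in> nodes n"
  shows "refl n adj i (\<lambda>m. x m - t * y m) = (\<lambda>m. refl n adj i x m - t * refl n adj i y m)"
  by (simp add: refl_def ip_lin algebra_simps)

lemma refl_neg: "refl n adj i (\<lambda>m. - x m) = (\<lambda>m. - refl n adj i x m)"
  by (simp add: refl_def ip_lin algebra_simps)

lemma root_ip_self: assumes "diagram n adj" "v \<in> roots n adj" shows "ip n adj v v = 2"
  using assms(2) by induct (auto simp: refl_ip[OF assms(1)])

lemma weyl_ip: assumes "diagram n adj" "w \<in> weyl n adj" shows "ip n adj (w u) (w v) = ip n adj u v"
  using assms(2) by induct (auto simp: refl_ip[OF assms(1)])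

definition rr :: "nat \<Rightarrow> (nat \<Rightarrow> nat \<Rightarrow> bool) \<Rightarrow> vec \<Rightarrow> vec \<Rightarrow> vec" where
  "rr n adj v u = (\<lambda>m. u m - ip n adj v u * v m)"

lemma rr_step: assumes "diagram n adj" "i \<in> nodes n"
  shows "rr n adj (refl n adj i v) u = refl n adj i (rr n adj v (refl n adj i u))"
proof -
  have "ip n adj v (refl n adj i u) = ip n adj (refl n adj i v) u"
    using refl_ip[OF assms, of v "refl n adj i u"] refl_refl[OF assms(2)] by simp
  then show ?thesis unfolding rr_def using assms(2)
    by (simp add: refl_lin refl_refl)
qed

lemma rr_closed: assumes "diagram n adj" "v \<in> roots n adj" "u \<in> roots n adj"
  shows "rr n adj v u \<in> roots n adj"
  using assms(2,3)
proof (induct arbitrary: u)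
  case (roots_simple j)
  have "rr n adj (alpha j) u = refl n adj j u" by (simp add: rr_def refl_def mult.commute)
  then show ?case using roots_simple by (simp add: roots.roots_refl)
next
  case (roots_refl v i)
  then show ?case by (simp add: rr_step[OF assms(1)] roots.roots_refl)
qed

lemma neg_closed: assumes "diagram n adj" "v \<in> roots n adj"
  shows "(\<lambda>m. - v m) \<in> roots n adj"
proof -
  have "rr n adj v v = (\<lambda>m. - v m)" by (simp add: rr_def root_ip_self[OF assms])
  then show ?thesis using rr_closed[OF assms assms(2)] by simp
qed

lemma roots_finite: assumes "spherical n adj" shows "finite (roots n adj)"
proof -
  have "roots n adj \<subseteq> (\<lambda>p. fst p (alpha (snd p))) ` (weyl n adj \<times> nodes n)"
  proof
    fix v assume "v \<in> roots n adj"
    then show "v \<in> (\<lambda>p. fst p (alpha (snd p))) ` (weyl n adj \<times> nodes n)"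
    proof induct
      case (roots_simple i)
      show ?case using roots_simple by (auto intro!: image_eqI[where x="(id, i)"] weyl.intros)
    next
      case (roots_refl v i)
      then obtain w j where "w \<in> weyl n adj" "j \<in> nodes n" "v = w (alpha j)" by auto
      then show ?case using roots_refl
        by (intro image_eqI[where x="(refl n adj i \<circ> w, j)"]) (auto intro: weyl.intros)
    qed
  qed
  moreover have "finite (weyl n adj \<times> nodes n)" using assms by (simp add: spherical_def)
  ultimately show ?thesis by (meson finite_surj)
qed


lemma big_ip_simple: assumes "diagram n adj" "spherical n adj" "x \<in> roots n adj" "i \<in> nodes n"
  and c2: "ip n adj (alpha i) x \<ge> 2"
  shows "x = alpha i"
proof (cases "\<forall>j. j \<noteq> i \<longrightarrow> x j = 0")
  case True
  then have xe: "x = (\<lambda>m. x i * alpha i m)" by (auto simp: alpha_def)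
  have "ip n adj x x = x i * x i * 2" using assms(4) by (subst (1 2) xe) (simp add: ip_lin)
  then have 1: "x i * x i = 1" using root_ip_self[OF assms(1,3)] by simp
  have "ip n adj (alpha i) x = x i * 2" using assms(4) by (subst xe) (simp add: ip_lin)
  then have g: "x i \<ge> 1" using c2 by simp
  then have "x i * 1 \<le> x i * x i" by (intro mult_left_mono) auto
  then have "x i = 1" using 1 g by simp
  then show ?thesis using xe by simp
next
  case False
  then obtain j where j: "j \<noteq> i" "x j \<noteq> 0" by auto
  define c where "c = ip n adj (alpha i) x"
  define f where "f = (\<lambda>w::vec. w j * x j)"
  have fl: "f (\<lambda>m. c * v m - u m) = c * f v - f u" for u v by (simp add: f_def algebra_simps)
  have key: "\<exists>u\<in>roots n adj. \<exists>v\<in>roots n adj. ip n adj u v = c \<and> 0 \<le> f u \<and> f u + 1 \<le> f v \<and> int m \<le> f v" for m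
  proof (induct m)
    case 0
    have "x j * x j > 0" using j(2) by (auto simp: zero_less_mult_iff linorder_neq_iff)
    then have "f x \<ge> 1" by (simp add: f_def)
    moreover have "f (alpha i) = 0" using j(1) by (simp add: f_def alpha_def)
    moreover have "alpha i \<in> roots n adj" using assms(4) by (rule roots.intros)
    ultimately show ?case using assms(3)
      by (intro bexI[of _ "alpha i"] bexI[of _ x]) (auto simp: c_def)
  next
    case (Suc m)
    then obtain u v where uv: "u \<in> roots n adj" "v \<in> roots n adj" "ip n adj u v = c" "0 \<le> f u" "f u + 1 \<le> f v" "int m \<le> f v"
      by auto
    have e: "(\<lambda>m. c * v m - u m) = (\<lambda>m. - rr n adj v u m)"
      using uv(3) ip_sym[OF assms(1), of u v] by (simp add: rr_def)
    have r: "(\<lambda>m. c * v m - u m) \<in> roots n adj"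
      unfolding e by (intro neg_closed assms(1) rr_closed uv)
    have "ip n adj v (\<lambda>m. c * v m - u m) = c"
      using uv(3) ip_sym[OF assms(1), of u v] root_ip_self[OF assms(1) uv(2)] by (simp add: ip_lin)
    moreover have "c * f v \<ge> 2 * f v" using uv c2 unfolding c_def
      by (intro mult_right_mono) auto
    then have "c * f v - f u \<ge> f v + 1" using uv by linarith
    ultimately show ?case using r uv by (intro bexI[of _ v] bexI[of _ "(\<lambda>m. c * v m - u m)"]) (auto simp: fl)
  qed
  have "finite (f ` roots n adj)" using roots_finite[OF assms(2)] by simp
  then have M: "\<forall>y\<in>f ` roots n adj. y \<le> Max (f ` roots n adj)" by simp
  define M where "M = Max (f ` roots n adj)"
  obtain v where v: "v \<in> roots n adj" "int (nat (M+1)) \<le> f v" using key[of "nat (M+1)"] by blast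
  have "f v \<le> M" using M v(1) unfolding M_def by blast
  with v(2) show ?thesis by linarith
qed


lemma posroot_small: assumes "diagram n adj" "spherical n adj" "x \<in> posroots n adj" "i \<in> nodes n"
  shows "ip n adj (alpha i) x = -1 \<or> ip n adj (alpha i) x = 0 \<or> ip n adj (alpha i) x = 1 \<or> x = alpha i"
proof -
  have xr: "x \<in> roots n adj" and xn: "\<forall>k\<in>nodes n. x k \<ge> 0" using assms(3) by (auto simp: posroots_def)
  have "ip n adj (alpha i) x > -2"
  proof (rule ccontr)
    assume "\<not> ?thesis"
    then have "ip n adj (alpha i) (\<lambda>m. - x m) \<ge> 2" by (simp add: ip_lin)
    then have "(\<lambda>m. - x m) = alpha i" using big_ip_simple[OF assms(1,2) neg_closed[OF assms(1) xr] assms(4)] by blast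
    then have "- x i = 1" by (metis alpha_def)
    then show False using xn assms(4) by force
  qed
  moreover have "ip n adj (alpha i) x \<ge> 2 \<Longrightarrow> x = alpha i" using big_ip_simple[OF assms(1,2) xr assms(4)] .
  ultimately show ?thesis by linarith
qed

lemma ip_le_coord: assumes "\<forall>k\<in>nodes n. b k \<ge> 0" "i \<in> nodes n"
  shows "ip n adj (alpha i) b \<le> 2 * b i"
proof -
  have "ip n adj (alpha i) b = b i * cartan adj i i + (\<Sum>j\<in>nodes n - {i}. b j * cartan adj i j)"
    using assms(2) by (simp add: ip_alpha_l sum.remove)
  moreover have "(\<Sum>j\<in>nodes n - {i}. b j * cartan adj i j) \<le> 0"
  proof (intro sum_nonpos)
    fix j assume "j \<in> nodes n - {i}"
    then show "b j * cartan adj i j \<le> 0" using assms(1) by (auto simp: cartan_def mult_nonneg_nonpos)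
  qed
  ultimately show ?thesis by (simp add: cartan_def)
qed

lemma zero_ip: assumes "\<forall>k\<in>nodes n. v k = 0" shows "ip n adj v v = 0"
  using assms by (simp add: ip_def)

lemma root_height_pos: assumes "diagram n adj" "v \<in> roots n adj" "\<forall>k\<in>nodes n. v k \<ge> 0"
  shows "height n v \<ge> 1"
proof (rule ccontr)
  assume "\<not> ?thesis"
  then have "height n v \<le> 0" by simp
  then have "\<forall>k\<in>nodes n. v k = 0" using assms(3) unfolding height_def
    by (metis (no_types, lifting) antisym finite_nodes sum_nonneg sum_nonneg_eq_0_iff)
  then show False using zero_ip[of n v adj] root_ip_self[OF assms(1,2)] by simp
qed

lemma posroot_height: "diagram n adj \<Longrightarrow> v \<in> posroots n adj \<Longrightarrow> height n v \<ge> 1"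
  using root_height_pos by (auto simp: posroots_def)

lemma height_two: assumes "\<forall>k\<in>nodes n. b k \<ge> 0" "i \<in> nodes n" "k \<in> nodes n" "i \<noteq> k"
  shows "b i + b k \<le> height n b"
proof -
  have "(\<Sum>j\<in>{i,k}. b j) \<le> (\<Sum>j\<in>nodes n. b j)"
    using assms by (intro sum_mono2) auto
  then show ?thesis using assms(4) by (simp add: height_def)
qed

lemma orbit_orth: assumes "diagram n adj" "orth_set n adj B0" "B \<in> orbit n adj B0"
  shows "orth_set n adj B"
proof -
  obtain w where w: "w \<in> weyl n adj" "B = act n adj w B0" using assms(3) by (auto simp: orbit_def)
  have "ip n adj x y = 0" if h: "x \<in> B" "y \<in> B" "x \<noteq> y" for x y
  proof -
    obtain b where b: "b \<in> B0" "x = w b \<or> x = (\<lambda>m. - w b m)" using h(1) unfolding w(2) act_def by blast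
    obtain c where c: "c \<in> B0" "y = w c \<or> y = (\<lambda>m. - w c m)" using h(2) unfolding w(2) act_def by blast
    have xp: "x \<in> posroots n adj" "y \<in> posroots n adj" using h w(2) by (auto simp: act_def)
    show ?thesis
    proof (cases "b = c")
      case True
      then have "y = (\<lambda>m. - x m)" using b c h(3) by auto
      then have "\<forall>k\<in>nodes n. x k = 0" using xp by (force simp: posroots_def)
      then have False using zero_ip[of n x adj] root_ip_self[OF assms(1)] xp by (simp add: posroots_def)
      then show ?thesis ..
    next
      case False
      then have "ip n adj (w b) (w c) = 0" using weyl_ip[OF assms(1) w(1)] assms(2) b(1) c(1)
        by (simp add: orth_set_def)
      then show ?thesis using b(2) c(2) by (auto simp: ip_lin)
    qed
  qed
  then show ?thesis using w(2) by (auto simp: orth_set_def act_def)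
qed


definition lexless :: "nat \<Rightarrow> vec set \<Rightarrow> vec set \<Rightarrow> bool" where
  "lexless n X Y \<longleftrightarrow> (\<exists>h. (\<forall>x. height n x < h \<longrightarrow> (x \<in> X \<longleftrightarrow> x \<in> Y)) \<and>
      {x\<in>Y. height n x = h} \<subset> {x\<in>X. height n x = h})"

lemma lexless_irrefl: "\<not> lexless n X X"
  by (simp add: lexless_def)

lemma lexless_trans: assumes "lexless n X Y" "lexless n Y Z" shows "lexless n X Z"
proof -
  obtain h1 where h1: "\<forall>x. height n x < h1 \<longrightarrow> (x \<in> X \<longleftrightarrow> x \<in> Y)"
    "{x\<in>Y. height n x = h1} \<subset> {x\<in>X. height n x = h1}" using assms(1) by (auto simp: lexless_def)
  obtain h2 where h2: "\<forall>x. height n x < h2 \<longrightarrow> (x \<in> Y \<longleftrightarrow> x \<in> Z)"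
    "{x\<in>Z. height n x = h2} \<subset> {x\<in>Y. height n x = h2}" using assms(2) by (auto simp: lexless_def)
  show ?thesis unfolding lexless_def
  proof (cases h1 h2 rule: linorder_cases)
    case less
    then have "{x\<in>Z. height n x = h1} = {x\<in>Y. height n x = h1}" using h2(1) by auto
    then show "\<exists>h. (\<forall>x. height n x < h \<longrightarrow> (x \<in> X) = (x \<in> Z)) \<and> {x \<in> Z. height n x = h} \<subset> {x \<in> X. height n x = h}"
      using h1 h2(1) less by (intro exI[of _ h1]) auto
  next
    case equal
    then show "\<exists>h. (\<forall>x. height n x < h \<longrightarrow> (x \<in> X) = (x \<in> Z)) \<and> {x \<in> Z. height n x = h} \<subset> {x \<in> X. height n x = h}"
      using h1 h2 by (intro exI[of _ h1]) auto
  next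
    case greater
    then have "{x\<in>X. height n x = h2} = {x\<in>Y. height n x = h2}" using h1(1) by auto
    then show "\<exists>h. (\<forall>x. height n x < h \<longrightarrow> (x \<in> X) = (x \<in> Z)) \<and> {x \<in> Z. height n x = h} \<subset> {x \<in> X. height n x = h}"
      using h1(1) h2 greater by (intro exI[of _ h2]) auto
  qed
qed

lemma prec_lexless: assumes "prec n X Y" "finite X" "finite Y" shows "lexless n X Y"
proof -
  define h where "h = Min (height n ` (X - Y))"
  define h' where "h' = Min (height n ` (Y - X))"
  have ne: "X - Y \<noteq> {}" "Y - X \<noteq> {}" and hh: "h < h'" using assms(1) by (auto simp: prec_def h_def h'_def)
  have fin: "finite (X - Y)" "finite (Y - X)" using assms(2,3) by auto
  have m1: "height n x \<ge> h" if "x \<in> X - Y" for x unfolding h_def using fin that by simp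
  have m2: "height n x \<ge> h'" if "x \<in> Y - X" for x unfolding h'_def using fin that by simp
  have "h \<in> height n ` (X - Y)" unfolding h_def using fin ne by (intro Min_in) auto
  then obtain x0 where x0: "x0 \<in> X - Y" "height n x0 = h" by auto
  show ?thesis unfolding lexless_def
  proof (intro exI[of _ h] conjI allI impI)
    fix x assume "height n x < h" then show "(x \<in> X) = (x \<in> Y)" using m1 m2 hh by force
  next
    show "{x \<in> Y. height n x = h} \<subset> {x \<in> X. height n x = h}"
      using m2 hh x0 by force
  qed
qed

lemma mless_lexless: assumes "finite (posroots n adj)" "\<forall>Z\<in>\<B>. Z \<subseteq> posroots n adj"
  and "(X, Y) \<in> mless n adj \<B>" shows "lexless n X Y"
proof -
  have stp: "lexless n A C" if hA: "(A, C) \<in> {(B, act n adj (refl n adj j) B) | B j.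
       B \<in> \<B> \<and> j \<in> nodes n \<and> prec n B (act n adj (refl n adj j) B)}" for A C
  proof -
    obtain j where "A \<in> \<B>" "C = act n adj (refl n adj j) A" "prec n A C" using hA by auto
    moreover have "act n adj (refl n adj j) A \<subseteq> posroots n adj" by (auto simp: act_def)
    ultimately show ?thesis using assms(1,2) by (intro prec_lexless) (auto intro: finite_subset)
  qed
  show ?thesis using assms(3) unfolding mless_def
  proof (induct rule: trancl_induct)
    case (base y) then show ?case by (rule stp)
  next
    case (step y z) then show ?case using lexless_trans stp by blast
  qed
qed


lemma not_both: assumes "diagram n adj" "v \<in> posroots n adj" "(\<lambda>m. - v m) \<in> posroots n adj" shows False
proof -
  have "\<forall>k\<in>nodes n. v k = 0" using assms(2,3) by (force simp: posroots_def)
  then show False using zero_ip[of n v adj] root_ip_self[OF assms(1)] assms(2) by (simp add: posroots_def)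
qed

lemma refl_alpha_self: "j \<in> nodes n \<Longrightarrow> refl n adj j (alpha j) = (\<lambda>m. - alpha j m)"
  by (simp add: refl_def)

lemma refl_fix: "ip n adj (alpha j) x = 0 \<Longrightarrow> refl n adj j x = x"
  by (simp add: refl_def)

lemma refl_posroot: assumes "diagram n adj" "x \<in> posroots n adj" "j \<in> nodes n"
  "ip n adj (alpha j) x = 1 \<or> ip n adj (alpha j) x = -1"
  shows "refl n adj j x \<in> posroots n adj"
proof -
  have xr: "x \<in> roots n adj" and xn: "\<forall>k\<in>nodes n. x k \<ge> 0" using assms(2) by (auto simp: posroots_def)
  have "ip n adj (alpha j) x \<le> 2 * x j" using ip_le_coord[OF xn assms(3)] .
  then have "\<forall>k\<in>nodes n. refl n adj j x k \<ge> 0" using xn assms(4)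
    by (auto simp: refl_def alpha_def)
  then show ?thesis using xr assms(3) by (simp add: posroots_def roots.roots_refl)
qed

lemma bad_case: assumes dg: "diagram n adj" and sp: "spherical n adj" and ob: "orth_set n adj B"
  and bB: "\<beta> \<in> B" and jn: "j \<in> nodes n" and e1: "ip n adj (alpha j) \<beta> = 1"
  and mn: "\<forall>x\<in>B. moved n adj j x \<longrightarrow> height n \<beta> \<le> height n x"
  shows "lexless n (act n adj (refl n adj j) B) B"
proof -
  define A where "A = act n adj (refl n adj j) B"
  have Bp: "B \<subseteq> posroots n adj" using ob by (simp add: orth_set_def)
  have hb: "height n \<beta> \<ge> 1" using posroot_height[OF dg] Bp bB by auto
  have S1: "x \<in> A" if h1: "x \<in> B" "height n x < height n \<beta>" for x
  proof -
    have xp: "x \<in> posroots n adj" using h1 Bp by auto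
    have nm: "\<not> moved n adj j x" using mn h1 by force
    then consider "ip n adj (alpha j) x = 0" | "x = alpha j"
      using posroot_small[OF dg sp xp jn] by (auto simp: moved_def)
    then show ?thesis
    proof cases
      case 1 then show ?thesis using xp h1(1) unfolding A_def act_def by (auto simp: refl_fix intro!: bexI[of _ x])
    next
      case 2 then show ?thesis using xp h1(1) jn unfolding A_def act_def
        by (auto simp: refl_alpha_self intro!: bexI[of _ x])
    qed
  qed
  have S2: "y \<in> B" if h2: "y \<in> A" "height n y < height n \<beta> - 1" for y
  proof -
    have yp: "y \<in> posroots n adj" using h2(1) by (simp add: A_def act_def)
    obtain x where x: "x \<in> B" "y = refl n adj j x \<or> y = (\<lambda>m. - refl n adj j x m)"
      using h2(1) unfolding A_def act_def by blast
    have xp: "x \<in> posroots n adj" using x Bp by auto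
    consider "ip n adj (alpha j) x = 0" | "x = alpha j" | "moved n adj j x"
      using posroot_small[OF dg sp xp jn] by (auto simp: moved_def)
    then show ?thesis
    proof cases
      case 1
      then have "y = x \<or> y = (\<lambda>m. - x m)" using x(2) by (simp add: refl_fix)
      then show ?thesis using x(1) not_both[OF dg xp] yp by auto
    next
      case 2
      then have "y = (\<lambda>m. - alpha j m) \<or> y = x" using x(2) jn by (simp add: refl_alpha_self)
      moreover have "y \<noteq> (\<lambda>m. - alpha j m)"
      proof
        assume "y = (\<lambda>m. - alpha j m)"
        then have "y j = -1" by (simp add: alpha_def)
        then show False using yp jn by (auto simp: posroots_def)
      qed
      ultimately show ?thesis using x(1) by auto
    next
      case 3
      then have hx: "height n x \<ge> height n \<beta>" using mn x(1) by auto
      define c where "c = ip n adj (alpha j) x"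
      have c: "c = 1 \<or> c = -1" using 3 by (auto simp: c_def moved_def)
      have "height n (refl n adj j x) = height n x - c"
        using jn by (simp add: refl_def height_lin c_def height_alpha)
      then have "height n y = height n x - c \<or> height n y = -(height n x - c)"
        using x(2) by (auto simp: height_uminus)
      then have False using hx c h2(2) posroot_height[OF dg yp] hb
        by (elim disjE; linarith)
      then show ?thesis ..
    qed
  qed
  define v where "v = refl n adj j \<beta>"
  have ve: "v = (\<lambda>m. \<beta> m - alpha j m)" using e1 by (simp add: v_def refl_def)
  have vA: "v \<in> A" using refl_posroot[OF dg _ jn] Bp bB e1 unfolding A_def act_def v_def by auto
  have vh: "height n v = height n \<beta> - 1" using jn by (simp add: ve height_lin height_alpha)
  have vB: "v \<notin> B"
  proof
    assume "v \<in> B"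
    moreover have "v j = \<beta> j - 1" by (simp add: ve alpha_def)
    then have "v \<noteq> \<beta>" by auto
    ultimately have "ip n adj \<beta> v = 0" using ob bB by (auto simp: orth_set_def)
    moreover have "ip n adj \<beta> v = 1"
      using root_ip_self[OF dg, of \<beta>] Bp bB e1 ip_sym[OF dg, of \<beta> "alpha j"]
      by (simp add: ve ip_lin posroots_def subset_iff)
    ultimately show False by simp
  qed
  show ?thesis unfolding A_def[symmetric] lexless_def
  proof (intro exI[of _ "height n \<beta> - 1"] conjI allI impI)
    fix x assume "height n x < height n \<beta> - 1"
    then show "(x \<in> A) = (x \<in> B)" using S1[of x] S2[of x] by linarith
  next
    show "{x \<in> B. height n x = height n \<beta> - 1} \<subset> {x \<in> A. height n x = height n \<beta> - 1}"
    proof (rule psubsetI)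
      show "{x \<in> B. height n x = height n \<beta> - 1} \<subseteq> {x \<in> A. height n x = height n \<beta> - 1}"
        using S1 by auto
      show "{x \<in> B. height n x = height n \<beta> - 1} \<noteq> {x \<in> A. height n x = height n \<beta> - 1}"
        using vA vB vh by blast
    qed
  qed
qed


lemma main_case: assumes dg: "diagram n adj" and sp: "spherical n adj" and ob: "orth_set n adj B"
  and inn: "i \<in> nodes n" and knn: "k \<in> nodes n" and ik: "i \<noteq> k"
  and eq: "act n adj (refl n adj i) B = act n adj (refl n adj k) B"
  and lx: "lexless n B (act n adj (refl n adj i) B)"
  and bB: "\<beta> \<in> B" and mi: "moved n adj i \<beta>"
  and mn: "\<forall>x\<in>B. (moved n adj i x \<or> moved n adj k x) \<longrightarrow> height n \<beta> \<le> height n x"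
  shows "(\<lambda>m. \<beta> m + alpha i m + alpha k m) \<in> B \<and> \<not> adj i k"
proof -
  have Bp: "B \<subseteq> posroots n adj" using ob by (simp add: orth_set_def)
  have bp: "\<beta> \<in> posroots n adj" using Bp bB by auto
  have bn: "\<forall>m\<in>nodes n. \<beta> m \<ge> 0" and br: "\<beta> \<in> roots n adj" using bp by (auto simp: posroots_def)
  define \<epsilon> where "\<epsilon> = ip n adj (alpha i) \<beta>"
  define d where "d = ip n adj (alpha k) \<beta>"
  define a where "a = cartan adj k i"
  have eps: "\<epsilon> = 1 \<or> \<epsilon> = -1" using mi by (auto simp: moved_def \<epsilon>_def)
  have aki: "ip n adj (alpha k) (alpha i) = a" using inn knn by (simp add: ip_alpha_alpha a_def)
  have bai: "ip n adj \<beta> (alpha i) = \<epsilon>" using ip_sym[OF dg] \<epsilon>_def by metis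
  have bak: "ip n adj \<beta> (alpha k) = d" using ip_sym[OF dg] d_def by metis
  have bb: "ip n adj \<beta> \<beta> = 2" using root_ip_self[OF dg br] .
  have aik: "alpha k i = 0" "alpha i k = 0" using ik by (auto simp: alpha_def)
  define v where "v = refl n adj i \<beta>"
  have ve: "v = (\<lambda>m. \<beta> m - \<epsilon> * alpha i m)" by (simp add: v_def refl_def \<epsilon>_def)
  have "v \<in> act n adj (refl n adj i) B"
    using refl_posroot[OF dg bp inn] eps bB unfolding act_def v_def \<epsilon>_def by auto
  then have "v \<in> act n adj (refl n adj k) B" using eq by simp
  then obtain \<gamma> where gB: "\<gamma> \<in> B" and gv: "v = refl n adj k \<gamma> \<or> v = (\<lambda>m. - refl n adj k \<gamma> m)"
    unfolding act_def by blast
  have gv2: "\<gamma> = refl n adj k v \<or> \<gamma> = (\<lambda>m. - refl n adj k v m)"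
    using gv refl_refl[OF knn] refl_neg by (metis (no_types, lifting) ext minus_minus)
  define g where "g = (\<lambda>m. \<beta> m - \<epsilon> * alpha i m - (d - \<epsilon> * a) * alpha k m)"
  have "ip n adj (alpha k) v = d - \<epsilon> * a" by (simp add: ve ip_lin aki d_def)
  then have rkv: "refl n adj k v = g" by (simp add: refl_def g_def ve)
  have gs: "\<gamma> = g \<or> \<gamma> = (\<lambda>m. - g m)" using gv2 rkv by simp
  have gi: "g i = \<beta> i - \<epsilon>" using ik by (simp add: g_def alpha_def)
  have gneq: "\<gamma> \<noteq> \<beta>"
  proof
    assume "\<gamma> = \<beta>"
    then have "\<beta> i = \<beta> i - \<epsilon> \<or> \<beta> i = - (\<beta> i - \<epsilon>)" using gs gi by (metis)
    then show False using eps by presburger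
  qed
  then have "ip n adj \<beta> \<gamma> = 0" using ob bB gB by (auto simp: orth_set_def)
  moreover have "ip n adj \<beta> g = 2 - \<epsilon> * \<epsilon> - (d - \<epsilon> * a) * d"
    by (simp add: g_def ip_lin bai bak bb)
  moreover have "\<epsilon> * \<epsilon> = 1" using eps by auto
  ultimately have "d * (d - \<epsilon> * a) = 1" using gs by (auto simp: ip_lin algebra_simps)
  then have dd: "(d = 1 \<and> d - \<epsilon> * a = 1) \<or> (d = -1 \<and> d - \<epsilon> * a = -1)" by (simp add: zmult_eq_1_iff)
  then have "\<epsilon> * a = 0" by auto
  then have a0: "a = 0" using eps by auto
  have nadj: "\<not> adj i k"
  proof
    assume "adj i k"
    then have "adj k i" using dg inn knn by (auto simp: diagram_def)
    then show False using a0 ik by (simp add: a_def cartan_def)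
  qed
  have d1: "d = 1 \<or> d = -1" using dd by auto
  have ge: "g = (\<lambda>m. \<beta> m - \<epsilon> * alpha i m - d * alpha k m)" using a0 by (simp add: g_def)
  have hg: "height n g = height n \<beta> - \<epsilon> - d" using inn knn by (simp add: ge height_lin height_alpha)
  have bk: "d = 1 \<Longrightarrow> \<beta> k \<ge> 1" using ip_le_coord[OF bn knn, of adj] d_def by simp
  have bi: "\<epsilon> = 1 \<Longrightarrow> \<beta> i \<ge> 1" using ip_le_coord[OF bn inn, of adj] \<epsilon>_def by simp
  have h2: "\<beta> i + \<beta> k \<le> height n \<beta>" using height_two[OF bn inn knn ik] .
  have bi0: "\<beta> i \<ge> 0" "\<beta> k \<ge> 0" using bn inn knn by auto
  have hb: "height n \<beta> \<ge> 1" using posroot_height[OF dg bp] .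
  show ?thesis
  proof (cases "\<gamma> = g")
    case False
    then have "\<gamma> = (\<lambda>m. - g m)" using gs by simp
    then have "height n \<gamma> = - height n g" by (simp add: height_uminus)
    moreover have "height n \<gamma> \<ge> 1" using posroot_height[OF dg] gB Bp by auto
    ultimately have False using hg eps d1 bk bi h2 bi0 hb by (elim disjE; linarith)
    then show ?thesis ..
  next
    case True
    have "ip n adj (alpha k) g = - d" using knn by (simp add: ge ip_lin d_def aki a0)
    then have "moved n adj k \<gamma>" using True d1 by (auto simp: moved_def)
    then have "height n \<beta> \<le> height n g" using mn gB True by auto
    then have ed: "\<epsilon> + d \<le> 0" using hg by simp
    consider "\<epsilon> = -1" "d = -1" | "\<epsilon> = 1" | "d = 1" using eps d1 by auto
    then show ?thesis
    proof cases
      case 1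
      then have "\<gamma> = (\<lambda>m. \<beta> m + alpha i m + alpha k m)" using True ge by simp
      then show ?thesis using gB nadj by simp
    next
      case 2
      have "lexless n (act n adj (refl n adj i) B) B"
        using bad_case[OF dg sp ob bB inn] 2 mn \<epsilon>_def by auto
      then have False using lx lexless_trans lexless_irrefl by blast
      then show ?thesis ..
    next
      case 3
      have "lexless n (act n adj (refl n adj k) B) B"
        using bad_case[OF dg sp ob bB knn] 3 mn d_def by auto
      then have False using lx lexless_trans lexless_irrefl eq by metis
      then show ?thesis ..
    qed
  qed
qed


theorem lemma3p3:
  fixes n :: nat and adj :: "nat \<Rightarrow> nat \<Rightarrow> bool" and B0 B :: "vec set"
    and i k :: nat and \<beta> :: vec
  assumes "diagram n adj" and "spherical n adj"
    and "orth_set n adj B0"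
    and "admissible n adj (orbit n adj B0)"
    and "B \<in> orbit n adj B0"
    and "i \<in> nodes n" and "k \<in> nodes n" and "i \<noteq> k"
    and "act n adj (refl n adj i) B = act n adj (refl n adj k) B"
    and "(B, act n adj (refl n adj i) B) \<in> mless n adj (orbit n adj B0)"
    and "\<beta> \<in> B" and "moved n adj i \<beta> \<or> moved n adj k \<beta>"
    and "\<forall>\<gamma>\<in>B. (moved n adj i \<gamma> \<or> moved n adj k \<gamma>) \<longrightarrow> height n \<beta> \<le> height n \<gamma>"
  shows "(\<lambda>m. \<beta> m + alpha i m + alpha k m) \<in> B \<and> \<not> adj i k"
proof -
  have ob: "orth_set n adj B" using orbit_orth[OF assms(1,3,5)] .
  have fp: "finite (posroots n adj)"
    using roots_finite[OF assms(2)] by (rule finite_subset[rotated]) (auto simp: posroots_def)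
  have "\<forall>Z\<in>orbit n adj B0. Z \<subseteq> posroots n adj" by (auto simp: orbit_def act_def)
  then have lx: "lexless n B (act n adj (refl n adj i) B)" using mless_lexless[OF fp _ assms(10)] by blast
  then have lx2: "lexless n B (act n adj (refl n adj k) B)" using assms(9) by simp
  show ?thesis
  proof (cases "moved n adj i \<beta>")
    case True
    show ?thesis using main_case[OF assms(1,2) ob assms(6,7,8,9) lx assms(11) True assms(13)] .
  next
    case False
    then have mk: "moved n adj k \<beta>" using assms(12) by simp
    have "(\<lambda>m. \<beta> m + alpha k m + alpha i m) \<in> B \<and> \<not> adj k i"
      using main_case[OF assms(1,2) ob assms(7,6) assms(8)[symmetric] assms(9)[symmetric] lx2 assms(11) mk]
        assms(13) by blast
    moreover have "(\<lambda>m. \<beta> m + alpha k m + alpha i m) = (\<lambda>m. \<beta> m + alpha i m + alpha k m)"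
      by (simp add: algebra_simps)
    moreover have "adj i k \<longleftrightarrow> adj k i" using assms(1,6,7) by (auto simp: diagram_def)
    ultimately show ?thesis by simp
  qed
qed

end
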